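(* Let $F(z)=\sum_{k=0}^\infty b_k z^k\in\mathcal{B}$ with $b_1=a\in(0,1)$, and let $0<r\le 1/\sqrt3$. Then for every integer $n\ge 2$, \[ \sum_{k=2}^n k|b_k|^2r^{2k}\le \frac{3(9-4a^2)^2}{64a^4}\sum_{k=2}^n\frac1k\left(\frac43a^2r^2\right)^k. \]
   Context: $\mathbb{D}$ denotes the open unit disc. $\mathcal{B}$ is the class of functions $F$ analytic in $\mathbb{D}$ satisfying $|F'(z)|\le \frac{1}{1-|z|^2}$ for all $z\in\mathbb{D}$. For $F\in\mathcal{B}$ we write its Taylor expansion as $F(z)=\sum_{k=0}^\infty b_k z^k$. *)

theory Defs
  imports "HOL-Complex_Analysis.Complex_Analysis"
begin

definition bloch_class :: "(complex \<Rightarrow> complex) set" where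
  "bloch_class = {F. F holomorphic_on ball 0 1 \<and>
     (\<forall>z\<in>ball 0 1. norm (deriv F z) \<le> 1 / (1 - (norm z)\<^sup>2))}"

definition taylor_coeff :: "(complex \<Rightarrow> complex) \<Rightarrow> nat \<Rightarrow> complex" where
  "taylor_coeff F k = (deriv ^^ k) F 0 / of_nat (fact k)"

end

theory Submission
  imports Defs
begin


abbreviation "cp \<equiv> circlepath (0::complex) 1"

lemma cp_eq: "cp t = exp (2 * of_real pi * \<i> * of_real t)"
  by (simp add: circlepath)

lemma norm_cp [simp]: "norm (cp t) = 1"
  by (simp add: cp_eq norm_exp_eq_Re)

lemma cnj_cp: "cnj (cp t) = inverse (cp t)"
proof -
  have "cp t * cnj (cp t) = 1"
    using norm_cp[of t] by (metis complex_norm_square power_one of_real_1)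
  then show ?thesis by (simp add: field_simps inverse_eq_divide)
     (metis mult_cancel_left1 nonzero_mult_div_cancel_left one_neq_zero mult_zero_left)
qed

lemma cp_integrable:
  fixes h :: "complex \<Rightarrow> 'a::banach"
  assumes "continuous_on (sphere 0 1) h"
  shows "(\<lambda>t. h (cp t)) integrable_on {0..1}"
proof -
  have "continuous_on {0..1} cp" using path_circlepath unfolding path_def by blast
  moreover have "cp ` {0..1} \<subseteq> sphere 0 1" using path_image_circlepath[of 0 1]
    unfolding path_image_def by simp
  ultimately have "continuous_on {0..1} (\<lambda>t. h (cp t))"
    using continuous_on_compose2[OF assms] by blast
  then show ?thesis by (rule integrable_continuous_interval)
qed

lemma four:
  assumes holo: "F holomorphic_on ball 0 R" and R: "1 < R"
  shows "((\<lambda>t. F (cp t) * cnj (cp t) ^ k) has_integral taylor_coeff F k) {0..1}"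
proof -
  have c: "continuous_on (cball 0 1) F"
    by (rule continuous_on_subset[OF holomorphic_on_imp_continuous_on[OF holo]]) (use R in auto)
  have h: "F holomorphic_on ball 0 1"
    by (rule holomorphic_on_subset[OF holo]) (use R in auto)
  have "((\<lambda>u. F u / (u-0) ^ (Suc k)) has_contour_integral ((2 * pi * \<i>) / (fact k) * (deriv ^^ k) F 0))
           cp"
    by (rule Cauchy_has_contour_integral_higher_derivative_circlepath[OF c h]) simp
  then have "((\<lambda>t. F (cp t) / (cp t) ^ Suc k * vector_derivative cp (at t within {0..1}))
     has_integral ((2 * pi * \<i>) / (fact k) * (deriv ^^ k) F 0)) {0..1}"
    unfolding has_contour_integral_def by simp
  then have "((\<lambda>t. (2 * pi * \<i>) * (F (cp t) * cnj (cp t) ^ k))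
     has_integral ((2 * pi * \<i>) / (fact k) * (deriv ^^ k) F 0)) {0..1}"
  proof (rule has_integral_eq[rotated])
    fix t :: real assume "t \<in> {0..1}"
    then have "vector_derivative cp (at t within {0..1}) = 2 * pi * \<i> * cp t"
      using vector_derivative_circlepath01[of t 0 1] by (simp add: cp_eq)
    moreover have "cp t \<noteq> 0" by (metis norm_cp norm_zero zero_neq_one)
    ultimately show "F (cp t) / (cp t) ^ Suc k * vector_derivative cp (at t within {0..1}) =
        (2 * pi * \<i>) * (F (cp t) * cnj (cp t) ^ k)"
      by (simp add: cnj_cp field_simps power_inverse)
  qed
  then show ?thesis
    by (subst (asm) has_integral_mult_right_iff) (auto simp: taylor_coeff_def)
qed

lemma tc_fps:
  assumes "F has_fps_expansion Ff"
  shows "taylor_coeff F k = fps_nth Ff k"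
  using fps_nth_fps_expansion[OF assms] by (simp add: taylor_coeff_def)

lemma orth:
  "((\<lambda>t. cp t ^ j * cnj (cp t) ^ k) has_integral (if j = k then 1 else 0)) {0..1}"
proof -
  have "((\<lambda>t. cp t ^ j * cnj (cp t) ^ k) has_integral taylor_coeff (\<lambda>z. z ^ j) k) {0..1}"
    by (rule four[of _ 2]) (auto intro: holomorphic_intros)
  moreover have "taylor_coeff (\<lambda>z. z ^ j) k = (if j = k then 1 else 0)"
    by (subst tc_fps[OF has_fps_expansion_fps_X_power]) auto
  ultimately show ?thesis by simp
qed

lemma parseval_poly:
  assumes "finite K"
  shows "((\<lambda>t. (\<Sum>k\<in>K. q k * cp t ^ k) * cnj (\<Sum>k\<in>K. q k * cp t ^ k))
     has_integral (\<Sum>k\<in>K. q k * cnj (q k))) {0..1}"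
proof -
  have eq: "(\<Sum>k\<in>K. q k * cp t ^ k) * cnj (\<Sum>k\<in>K. q k * cp t ^ k) =
     (\<Sum>j\<in>K. \<Sum>k\<in>K. (q j * cnj (q k)) * (cp t ^ j * cnj (cp t) ^ k))" for t
    by (simp add: sum_distrib_left sum_distrib_right cnj_sum algebra_simps)
       (rule sum.swap)
  have "((\<lambda>t. \<Sum>j\<in>K. \<Sum>k\<in>K. (q j * cnj (q k)) * (cp t ^ j * cnj (cp t) ^ k)) has_integral
      (\<Sum>j\<in>K. \<Sum>k\<in>K. (q j * cnj (q k)) * (if j = k then 1 else 0))) {0..1}"
    by (intro has_integral_sum assms has_integral_mult_right orth)
  moreover have "(\<Sum>j\<in>K. \<Sum>k\<in>K. (q j * cnj (q k)) * (if j = k then 1 else 0)) =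
       (\<Sum>k\<in>K. q k * cnj (q k))"
    using assms by (simp add: if_distrib cong: if_cong)
  ultimately show ?thesis unfolding eq by simp
qed

definition J :: "(complex \<Rightarrow> complex) \<Rightarrow> real" where
  "J h = integral {0..1} (\<lambda>t. (cmod (h (cp t)))\<^sup>2)"

lemma J_has_integral:
  assumes "continuous_on (sphere 0 1) h"
  shows "((\<lambda>t. (cmod (h (cp t)))\<^sup>2) has_integral J h) {0..1}"
proof -
  have "continuous_on (sphere 0 1) (\<lambda>z. (cmod (h z))\<^sup>2)"
    by (intro continuous_intros assms)
  from cp_integrable[OF this] show ?thesis
    unfolding J_def by (simp add: integrable_integral)
qed

lemma J_nonneg: "J h \<ge> 0"
  unfolding J_def
  by (cases "(\<lambda>t. (cmod (h (cp t)))\<^sup>2) integrable_on {0..1}")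
     (auto intro!: integral_nonneg simp: not_integrable_integral)

lemma J_cplx:
  assumes "continuous_on (sphere 0 1) h"
  shows "((\<lambda>t. h (cp t) * cnj (h (cp t))) has_integral of_real (J h)) {0..1}"
proof -
  have "((\<lambda>t. of_real ((cmod (h (cp t)))\<^sup>2) :: complex) has_integral of_real (J h)) {0..1}"
    using has_integral_of_real[OF J_has_integral[OF assms]] by (simp add: o_def)
  then show ?thesis by (simp only: complex_norm_square)
qed

lemma bessel:
  assumes holo: "F holomorphic_on ball 0 R" and R: "1 < R"
  shows "(\<Sum>k\<le>N. (cmod (taylor_coeff F k))\<^sup>2) \<le> J F"
proof -
  define t where "t = taylor_coeff F"
  define P where "P = (\<lambda>z. \<Sum>k\<le>N. t k * z ^ k)"
  define S where "S = (\<Sum>k\<le>N. t k * cnj (t k))"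
  have S: "S = of_real (\<Sum>k\<le>N. (cmod (t k))\<^sup>2)"
    by (simp only: S_def of_real_sum complex_norm_square)
  have cF: "continuous_on (sphere 0 1) F"
    by (rule continuous_on_subset[OF holomorphic_on_imp_continuous_on[OF holo]]) (use R in auto)
  have cP: "continuous_on (sphere 0 1) P"
    unfolding P_def by (intro continuous_intros)
  have H1: "((\<lambda>x. F (cp x) * cnj (F (cp x))) has_integral of_real (J F)) {0..1}"
    by (rule J_cplx[OF cF])
  have H2: "((\<lambda>x. F (cp x) * cnj (P (cp x))) has_integral S) {0..1}"
  proof -
    have "((\<lambda>x. \<Sum>k\<le>N. cnj (t k) * (F (cp x) * cnj (cp x) ^ k)) has_integral
        (\<Sum>k\<le>N. cnj (t k) * t k)) {0..1}"
      unfolding t_def by (intro has_integral_sum has_integral_mult_right four[OF holo R]) auto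
    moreover have "(\<Sum>k\<le>N. cnj (t k) * (F (cp x) * cnj (cp x) ^ k)) = F (cp x) * cnj (P (cp x))" for x
      by (simp add: P_def cnj_sum sum_distrib_left algebra_simps)
    ultimately show ?thesis by (simp add: S_def mult.commute)
  qed
  have H3: "((\<lambda>x. P (cp x) * cnj (F (cp x))) has_integral cnj S) {0..1}"
    using has_integral_cnj[of "\<lambda>x. F (cp x) * cnj (P (cp x))" S "{0..1}"] H2
    by (simp add: o_def mult.commute)
  have H4: "((\<lambda>x. P (cp x) * cnj (P (cp x))) has_integral S) {0..1}"
    unfolding P_def S_def by (rule parseval_poly) simp
  have I1: "((\<lambda>x. (F (cp x) * cnj (F (cp x)) - F (cp x) * cnj (P (cp x))) -
         P (cp x) * cnj (F (cp x)) + P (cp x) * cnj (P (cp x))) has_integral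
        (of_real (J F) - S - cnj S + S)) {0..1}"
    by (intro has_integral_add has_integral_diff H1 H2 H3 H4)
  have I2: "((\<lambda>x. (\<lambda>z. F z - P z) (cp x) * cnj ((\<lambda>z. F z - P z) (cp x))) has_integral
       of_real (J (\<lambda>z. F z - P z))) {0..1}"
    by (rule J_cplx) (intro continuous_intros cF cP)
  have I3: "((\<lambda>x. (\<lambda>z. F z - P z) (cp x) * cnj ((\<lambda>z. F z - P z) (cp x))) has_integral
        (of_real (J F) - S - cnj S + S)) {0..1}"
    by (rule has_integral_eq[OF _ I1]) (simp add: algebra_simps)
  have "of_real (J (\<lambda>z. F z - P z)) = (of_real (J F) - S - cnj S + S :: complex)"
    by (rule has_integral_unique[OF I2 I3])
  then have "complex_of_real (J (\<lambda>z. F z - P z)) = complex_of_real (J F - (\<Sum>k\<le>N. (cmod (t k))\<^sup>2))"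
    unfolding S by simp
  then have "J (\<lambda>z. F z - P z) = J F - (\<Sum>k\<le>N. (cmod (t k))\<^sup>2)"
    by (simp only: of_real_eq_iff)
  with J_nonneg[of "\<lambda>z. F z - P z"] show ?thesis by (simp add: t_def)
qed

lemma J_poly:
  assumes "finite K"
  shows "J (\<lambda>z. \<Sum>k\<in>K. q k * z ^ k) = (\<Sum>k\<in>K. (cmod (q k))\<^sup>2)"
proof -
  have "((\<lambda>t. (\<lambda>z. \<Sum>k\<in>K. q k * z ^ k) (cp t) * cnj ((\<lambda>z. \<Sum>k\<in>K. q k * z ^ k) (cp t))) has_integral
      of_real (J (\<lambda>z. \<Sum>k\<in>K. q k * z ^ k))) {0..1}"
    by (rule J_cplx) (intro continuous_intros)
  from has_integral_unique[OF this parseval_poly[OF assms, of q]]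
  have "complex_of_real (J (\<lambda>z. \<Sum>k\<in>K. q k * z ^ k)) = complex_of_real (\<Sum>k\<in>K. (cmod (q k))\<^sup>2)"
    by (simp only: of_real_sum complex_norm_square)
  then show ?thesis by (simp only: of_real_eq_iff)
qed

lemma J_mono:
  assumes "continuous_on (sphere 0 1) f" "continuous_on (sphere 0 1) g"
    and "\<And>z. z \<in> sphere 0 1 \<Longrightarrow> norm (f z) \<le> norm (g z)"
  shows "J f \<le> J g"
proof (rule has_integral_le[OF J_has_integral[OF assms(1)] J_has_integral[OF assms(2)]])
  fix t :: real
  have "cp t \<in> sphere 0 1" by simp
  then show "(cmod (f (cp t)))\<^sup>2 \<le> (cmod (g (cp t)))\<^sup>2"
    using assms(3) by (simp add: power_mono)
qed



lemma schur_step: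
  fixes G :: "complex \<Rightarrow> complex" and c0 :: real
  assumes holo: "G holomorphic_on ball 0 R" and R: "1 < R"
    and bd: "\<And>z. z \<in> sphere 0 1 \<Longrightarrow> norm (G z) \<le> 1"
    and nz: "\<And>z. z \<in> ball 0 R \<Longrightarrow> of_real c0 * G z \<noteq> 1"
    and G0: "G 0 = of_real c0" and c0: "0 \<le> c0" "c0 < 1"
  shows "(\<Sum>j=1..N. (cmod (taylor_coeff G j))\<^sup>2)
     \<le> (1 - c0\<^sup>2)\<^sup>2 + c0\<^sup>2 * (\<Sum>j=1..<N. (cmod (taylor_coeff G j))\<^sup>2)"
proof -
  define c where "c = taylor_coeff G"
  define Gf where "Gf = fps_expansion G 0"
  have oB: "open (ball (0::complex) R)" "(0::complex) \<in> ball 0 R" using R by auto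
  have GE: "G has_fps_expansion Gf"
    unfolding Gf_def by (rule has_fps_expansion_fps_expansion[OF oB holo])
  have Gfn: "fps_nth Gf j = c j" for j
    unfolding c_def by (rule tc_fps[OF GE, symmetric])
  define B where "B = (\<lambda>z. 1 - of_real c0 * G z)"
  define A where "A = (\<lambda>z. G z - of_real c0)"
  define w where "w = (\<lambda>z. A z / B z)"
  define Bf where "Bf = 1 - fps_const (of_real c0) * Gf"
  define Af where "Af = Gf - fps_const (of_real c0)"
  have BE: "B has_fps_expansion Bf"
    unfolding B_def Bf_def by (intro fps_expansion_intros GE)
  have AE: "A has_fps_expansion Af"
    unfolding A_def Af_def by (intro fps_expansion_intros GE)
  have Bnz: "B z \<noteq> 0" if "z \<in> ball 0 R" for z
    using nz[OF that] by (simp add: B_def)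
  have wh: "w holomorphic_on ball 0 R"
    unfolding w_def A_def B_def using Bnz[unfolded B_def]
    by (intro holomorphic_intros holo) auto
  define Wf where "Wf = fps_expansion w 0"
  have WE: "w has_fps_expansion Wf"
    unfolding Wf_def by (rule has_fps_expansion_fps_expansion[OF oB wh])
  have W0: "fps_nth Wf 0 = 0"
    using tc_fps[OF WE, of 0] by (simp add: taylor_coeff_def w_def A_def G0)
  have "(\<lambda>z. w z * B z) has_fps_expansion Wf * Bf"
    by (intro fps_expansion_intros WE BE)
  moreover have "eventually (\<lambda>z. w z * B z = A z) (nhds 0)"
  proof -
    have "eventually (\<lambda>z. z \<in> ball 0 R) (nhds (0::complex))"
      using oB by (intro eventually_nhds_in_open) auto
    then show ?thesis by eventually_elim (simp add: w_def Bnz)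
  qed
  ultimately have "A has_fps_expansion Wf * Bf"
    using has_fps_expansion_cong[of "\<lambda>z. w z * B z" A "Wf * Bf" "Wf * Bf"] by blast
  then have WBA: "Wf * Bf = Af" by (rule fps_expansion_unique_complex[OF _ AE])
  define Q where "Q = (\<lambda>z. \<Sum>k<N. fps_nth Bf k * z ^ k)"
  define Qf where "Qf = (\<Sum>k<N. fps_const (fps_nth Bf k) * fps_X ^ k)"
  have QE: "Q has_fps_expansion Qf"
    unfolding Q_def Qf_def by (intro fps_expansion_intros)
  have Qfn: "fps_nth Qf m = (if m < N then fps_nth Bf m else 0)" for m
    by (simp add: Qf_def fps_sum_nth if_distrib cong: if_cong)
  define Fn where "Fn = (\<lambda>z. w z * Q z)"
  have FE: "Fn has_fps_expansion Wf * Qf"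
    unfolding Fn_def by (intro fps_expansion_intros WE QE)
  have Fnh: "Fn holomorphic_on ball 0 R"
    unfolding Fn_def Q_def by (intro holomorphic_intros wh)
  have coef: "taylor_coeff Fn j = fps_nth Af j" if "j \<le> N" for j
  proof -
    have "taylor_coeff Fn j = fps_nth (Wf * Qf) j" by (rule tc_fps[OF FE])
    also have "\<dots> = fps_nth (Wf * Bf) j"
      unfolding fps_mult_nth
    proof (rule sum.cong[OF refl])
      fix i assume "i \<in> {0..j}"
      show "fps_nth Wf i * fps_nth Qf (j - i) = fps_nth Wf i * fps_nth Bf (j - i)"
        using that W0 \<open>i \<in> {0..j}\<close> by (cases "i = 0") (auto simp: Qfn)
    qed
    finally show ?thesis by (simp add: WBA)
  qed
  have cpt: "continuous_on (sphere 0 1) h" if "h holomorphic_on ball 0 R" for h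
    by (rule continuous_on_subset[OF holomorphic_on_imp_continuous_on[OF that]]) (use R in auto)
  have "(\<Sum>k\<le>N. (cmod (taylor_coeff Fn k))\<^sup>2) \<le> J Fn"
    by (rule bessel[OF Fnh R])
  also have "J Fn \<le> J Q"
  proof (rule J_mono)
    show "continuous_on (sphere 0 1) Fn" by (rule cpt[OF Fnh])
    show "continuous_on (sphere 0 1) Q" unfolding Q_def by (intro continuous_intros)
    fix z :: complex assume z: "z \<in> sphere 0 1"
    have "norm (w z) \<le> 1"
    proof -
      have zR: "z \<in> ball 0 R" using z R by auto
      have g1: "norm (G z) \<le> 1" by (rule bd[OF z])
      have "(cmod (A z))\<^sup>2 \<le> (cmod (B z))\<^sup>2"
      proof -
        have "(cmod (B z))\<^sup>2 - (cmod (A z))\<^sup>2 = (1 - c0\<^sup>2) * (1 - (cmod (G z))\<^sup>2)"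
          unfolding A_def B_def cmod_power2
          by (simp add: power2_eq_square algebra_simps)
        moreover have "0 \<le> (1 - c0\<^sup>2) * (1 - (cmod (G z))\<^sup>2)"
        proof -
          have "c0\<^sup>2 \<le> 1" using c0 by (simp add: power_le_one)
          moreover have "(cmod (G z))\<^sup>2 \<le> 1" using g1 by (simp add: power_le_one)
          ultimately show ?thesis by (intro mult_nonneg_nonneg) simp_all
        qed
        ultimately show ?thesis by linarith
      qed
      then have "cmod (A z) \<le> cmod (B z)"
        by (simp add: power2_le_iff_abs_le)
      then show ?thesis using Bnz[OF zR] by (simp add: w_def norm_divide divide_le_eq_1)
    qed
    then show "norm (Fn z) \<le> norm (Q z)"
      by (simp add: Fn_def norm_mult mult_left_le_one_le)
  qed
  also have "J Q = (\<Sum>k<N. (cmod (fps_nth Bf k))\<^sup>2)"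
    unfolding Q_def by (rule J_poly) simp
  finally have main: "(\<Sum>k\<le>N. (cmod (fps_nth Af k))\<^sup>2) \<le> (\<Sum>k<N. (cmod (fps_nth Bf k))\<^sup>2)"
    using coef by simp
  have Af0: "fps_nth Af 0 = 0" using Gfn[of 0] by (simp add: Af_def c_def taylor_coeff_def G0)
  have Afn: "fps_nth Af k = c k" if "k \<ge> 1" for k
    using that by (simp add: Af_def Gfn)
  have Bf0: "fps_nth Bf 0 = of_real (1 - c0\<^sup>2)"
    using Gfn[of 0] by (simp add: Bf_def c_def taylor_coeff_def G0 power2_eq_square)
  have Bfn: "fps_nth Bf k = - of_real c0 * c k" if "k \<ge> 1" for k
    using that by (simp add: Bf_def Gfn)
  have L: "(\<Sum>k\<le>N. (cmod (fps_nth Af k))\<^sup>2) = (\<Sum>j=1..N. (cmod (c j))\<^sup>2)"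
  proof -
    have "(\<Sum>k\<le>N. (cmod (fps_nth Af k))\<^sup>2) = (\<Sum>k=0..N. (cmod (fps_nth Af k))\<^sup>2)"
      by (simp add: atLeast0AtMost)
    also have "\<dots> = (\<Sum>k=1..N. (cmod (fps_nth Af k))\<^sup>2)"
      by (subst sum.atLeast_Suc_atMost[of 0 N]) (auto simp: Af0 intro: sum.cong)
    also have "\<dots> = (\<Sum>j=1..N. (cmod (c j))\<^sup>2)" by (intro sum.cong) (auto simp: Afn)
    finally show ?thesis .
  qed
  show ?thesis
  proof (cases N)
    case 0 then show ?thesis by simp
  next
    case (Suc M)
    have "(\<Sum>k<N. (cmod (fps_nth Bf k))\<^sup>2) = (\<Sum>k=0..M. (cmod (fps_nth Bf k))\<^sup>2)"
      using Suc by (simp add: atLeast0AtMost lessThan_Suc_atMost)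
    also have "\<dots> = (cmod (fps_nth Bf 0))\<^sup>2 + (\<Sum>k=1..M. (cmod (fps_nth Bf k))\<^sup>2)"
      by (subst sum.atLeast_Suc_atMost[of 0 M]) auto
    also have "(\<Sum>k=1..M. (cmod (fps_nth Bf k))\<^sup>2) = c0\<^sup>2 * (\<Sum>j=1..<N. (cmod (c j))\<^sup>2)"
    proof -
      have "(\<Sum>k=1..M. (cmod (fps_nth Bf k))\<^sup>2) = (\<Sum>k=1..M. c0\<^sup>2 * (cmod (c k))\<^sup>2)"
        using c0 by (intro sum.cong) (auto simp: Bfn norm_mult power_mult_distrib)
      moreover have "{1..M} = {1..<N}" using Suc by auto
      ultimately show ?thesis by (simp add: sum_distrib_left)
    qed
    also have "(cmod (fps_nth Bf 0))\<^sup>2 = (1 - c0\<^sup>2)\<^sup>2"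
    proof -
      have "(cmod (fps_nth Bf 0))\<^sup>2 = (cmod (complex_of_real (1 - c0\<^sup>2)))\<^sup>2" by (simp only: Bf0)
      also have "\<dots> = (1 - c0\<^sup>2)\<^sup>2" by (simp only: norm_of_real power2_abs)
      finally show ?thesis .
    qed
    finally show ?thesis using main L by (simp add: c_def)
  qed
qed



lemma geom_rec: "(\<Sum>j=1..Suc m. (q::real) ^ (j - 1)) = 1 + q * (\<Sum>j=1..m. q ^ (j - 1))"
proof (induction m)
  case 0 then show ?case by simp
next
  case (Suc m)
  have "(\<Sum>j=1..Suc (Suc m). q ^ (j - 1)) = (\<Sum>j=1..Suc m. q ^ (j - 1)) + q ^ Suc m" by simp
  also have "\<dots> = 1 + q * (\<Sum>j=1..m. q ^ (j - 1)) + q * q ^ m" using Suc by simp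
  also have "\<dots> = 1 + q * ((\<Sum>j=1..m. q ^ (j - 1)) + q ^ m)" by (simp add: algebra_simps)
  also have "(\<Sum>j=1..m. q ^ (j - 1)) + q ^ m = (\<Sum>j=1..Suc m. q ^ (j - 1))" by simp
  finally show ?case .
qed

lemma schur_bound:
  fixes G :: "complex \<Rightarrow> complex" and c0 :: real
  assumes holo: "G holomorphic_on ball 0 R" and R: "1 < R"
    and bd: "\<And>z. z \<in> sphere 0 1 \<Longrightarrow> norm (G z) \<le> 1"
    and nz: "\<And>z. z \<in> ball 0 R \<Longrightarrow> of_real c0 * G z \<noteq> 1"
    and G0: "G 0 = of_real c0" and c0: "0 \<le> c0" "c0 < 1"
  shows "(\<Sum>j=1..m. (cmod (taylor_coeff G j))\<^sup>2) \<le> (\<Sum>j=1..m. (1 - c0\<^sup>2)\<^sup>2 * (c0\<^sup>2) ^ (j - 1))"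
proof (induction m)
  case 0 then show ?case by simp
next
  case (Suc m)
  have "(\<Sum>j=1..Suc m. (cmod (taylor_coeff G j))\<^sup>2)
     \<le> (1 - c0\<^sup>2)\<^sup>2 + c0\<^sup>2 * (\<Sum>j=1..<Suc m. (cmod (taylor_coeff G j))\<^sup>2)"
    by (rule schur_step[OF holo R bd nz G0 c0])
  also have "(\<Sum>j=1..<Suc m. (cmod (taylor_coeff G j))\<^sup>2) = (\<Sum>j=1..m. (cmod (taylor_coeff G j))\<^sup>2)"
    by (simp add: atLeastLessThanSuc_atLeastAtMost)
  also have "(1 - c0\<^sup>2)\<^sup>2 + c0\<^sup>2 * \<dots> \<le> (1 - c0\<^sup>2)\<^sup>2 + c0\<^sup>2 * (\<Sum>j=1..m. (1 - c0\<^sup>2)\<^sup>2 * (c0\<^sup>2) ^ (j - 1))"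
    using Suc by (intro add_left_mono mult_left_mono) auto
  also have "\<dots> = (\<Sum>j=1..Suc m. (1 - c0\<^sup>2)\<^sup>2 * (c0\<^sup>2) ^ (j - 1))"
    by (simp only: geom_rec flip: sum_distrib_left) (simp add: algebra_simps)
  finally show ?case .
qed

lemma abel_aux:
  fixes w d :: "nat \<Rightarrow> real"
  assumes D: "\<And>m. (\<Sum>j=1..m. d j) \<le> 0" and mono: "\<And>j. w (Suc j) \<le> w j"
  shows "(\<Sum>j=1..n. w j * d j) \<le> w n * (\<Sum>j=1..n. d j)"
proof (induction n)
  case 0 then show ?case by simp
next
  case (Suc n)
  have "(\<Sum>j=1..Suc n. w j * d j) = (\<Sum>j=1..n. w j * d j) + w (Suc n) * d (Suc n)" by simp
  also have "\<dots> \<le> w n * (\<Sum>j=1..n. d j) + w (Suc n) * d (Suc n)" using Suc by simp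
  also have "w n * (\<Sum>j=1..n. d j) \<le> w (Suc n) * (\<Sum>j=1..n. d j)"
    using D[of n] mono[of n] by (intro mult_right_mono_neg) auto
  also have "w (Suc n) * (\<Sum>j=1..n. d j) + w (Suc n) * d (Suc n) = w (Suc n) * (\<Sum>j=1..Suc n. d j)"
    by (simp add: algebra_simps)
  finally show ?case by simp
qed

lemma abel:
  fixes w x y :: "nat \<Rightarrow> real"
  assumes P: "\<And>m. (\<Sum>j=1..m. x j) \<le> (\<Sum>j=1..m. y j)" and mono: "\<And>j. w (Suc j) \<le> w j"
    and pos: "\<And>j. 0 \<le> w j"
  shows "(\<Sum>j=1..n. w j * x j) \<le> (\<Sum>j=1..n. w j * y j)"
proof -
  have D: "(\<Sum>j=1..m. x j - y j) \<le> 0" for m using P[of m] by (simp add: sum_subtractf)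
  have "(\<Sum>j=1..n. w j * (x j - y j)) \<le> w n * (\<Sum>j=1..n. x j - y j)"
    by (rule abel_aux) (use D mono in auto)
  also have "\<dots> \<le> 0" using D[of n] pos[of n] by (simp add: mult_nonneg_nonpos)
  finally show ?thesis by (simp add: algebra_simps sum_subtractf)
qed


lemma we0:
  fixes a r :: real assumes "a > 0"
  shows "(9/4)*3^(Suc i)*r^(2*Suc i+2)/(Suc i+1) * ((1-(2*a/3)\<^sup>2)\<^sup>2 * ((2*a/3)\<^sup>2)^i)
    = 3 * (9 - 4 * a\<^sup>2)\<^sup>2 / (64 * a ^ 4) * ((1 / real (Suc i + 1)) * ((4/3) * a\<^sup>2 * r\<^sup>2) ^ (Suc i + 1))"
proof -
  define p where "p = (3::real)^i"
  define X where "X = (4*a^2)^i"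
  define q where "q = r^(2*i)"
  have p: "p > 0" by (simp add: p_def)
  have n9: "(9::real)^i = 3^i*3^i" by (simp flip: power_mult_distrib)
  have e1: "((2*a/3)\<^sup>2)^i = X / (p * p)"
    by (simp add: X_def p_def power_divide power_mult_distrib power_mult[symmetric] power2_eq_square n9)
  have e2: "((4/3) * a\<^sup>2 * r\<^sup>2) ^ (Suc i + 1) = X * 16 * a^4 * q * r^4 / (p * 9)"
    by (simp add: X_def p_def q_def power_divide power_mult_distrib power_mult[symmetric] power_add field_simps)
  have e3: "r^(2*Suc i+2) = q * r^4"
  proof -
    have "2*Suc i+2 = 2*i + 4" by simp
    then show ?thesis by (simp only: q_def power_add)
  qed
  have e4: "(3::real)^(Suc i) = 3 * p" by (simp add: p_def)
  have e5: "(1-(2*a/3)\<^sup>2)\<^sup>2 = (9 - 4 * a\<^sup>2)\<^sup>2 / 81"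
    by (simp add: power2_eq_square field_simps)
  have "p * (72 + real i * 36) > 0" using p by (intro mult_pos_pos) auto
  then have d1: "p * 72 + p * (real i * 36) \<noteq> 0" by (simp add: algebra_simps)
  have "p * (p * (648 + real i * 324)) > 0" using p by (intro mult_pos_pos) auto
  then have d2: "p * (p * 648) + p * (p * (real i * 324)) \<noteq> 0" by (simp add: algebra_simps)
  show ?thesis unfolding e1 e2 e3 e4 e5 using assms p
    by (simp add: field_simps) (simp add: divide_simps d1 d2, simp add: algebra_simps)
qed
lemma we:
  fixes a r :: real assumes "a > 0" "j \<ge> 1"
  shows "(9/4)*3^j*r^(2*j+2)/(real j+1) * ((1-(2*a/3)\<^sup>2)\<^sup>2 * ((2*a/3)\<^sup>2)^(j-1))
    = 3 * (9 - 4 * a\<^sup>2)\<^sup>2 / (64 * a ^ 4) * ((1 / real (Suc j)) * ((4/3) * a\<^sup>2 * r\<^sup>2) ^ Suc j)"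
proof -
  obtain i where j: "j = Suc i" using assms(2) by (cases j) auto
  show ?thesis using we0[OF assms(1), of i r] unfolding j by (simp add: add.commute)
qed


theorem theorem4:
  fixes F :: "complex \<Rightarrow> complex" and a r :: real and n :: nat
  assumes "F \<in> bloch_class"
    and "taylor_coeff F 1 = complex_of_real a"
    and "0 < a" and "a < 1"
    and "0 < r" and "r \<le> 1 / sqrt 3"
    and "n \<ge> 2"
  shows "(\<Sum>k=2..n. real k * (norm (taylor_coeff F k))\<^sup>2 * r ^ (2*k))
         \<le> 3 * (9 - 4 * a\<^sup>2)\<^sup>2 / (64 * a ^ 4)
             * (\<Sum>k=2..n. (1 / real k) * ((4/3) * a\<^sup>2 * r\<^sup>2) ^ k)"
proof -
  from assms(1) have hF: "F holomorphic_on ball 0 1"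
    and dF: "\<And>z. z \<in> ball 0 1 \<Longrightarrow> norm (deriv F z) \<le> 1 / (1 - (norm z)\<^sup>2)"
    unfolding bloch_class_def by auto
  define s where "s = 1 / sqrt 3"
  have s0: "s > 0" by (simp add: s_def)
  have s2: "s\<^sup>2 = 1/3" by (simp add: s_def power_divide)
  define R where "R = (5/4::real)"
  have R1: "1 < R" by (simp add: R_def)
  have sR: "s * R < 1"
  proof -
    have "(5/4::real) < sqrt 3" by (rule real_less_rsqrt) (simp add: power2_eq_square)
    then show ?thesis by (simp add: s_def R_def field_simps)
  qed
  define G where "G = (\<lambda>z. (2/3) * deriv F (of_real s * z))"
  have dFh: "deriv F holomorphic_on ball 0 1" by (intro holomorphic_deriv hF) auto
  have map: "of_real s * z \<in> ball 0 1" if "z \<in> ball 0 R" for z :: complex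
  proof -
    have "norm (of_real s * z) = s * norm z" using s0 by (simp add: norm_mult)
    also have "\<dots> \<le> s * R" using that s0 by (intro mult_left_mono) auto
    finally show ?thesis using sR by simp
  qed
  have h1: "(\<lambda>z. deriv F (of_real s * z)) holomorphic_on ball 0 R"
  proof -
    have "(\<lambda>z::complex. of_real s * z) ` ball 0 R \<subseteq> ball 0 1" using map by auto
    then show ?thesis
      using holomorphic_on_compose_gen[of "\<lambda>z. of_real s * z" "ball 0 R" "deriv F" "ball 0 1"] dFh
      by (auto simp: o_def intro: holomorphic_intros)
  qed
  have Gh: "G holomorphic_on ball 0 R"
    unfolding G_def by (intro holomorphic_intros h1)
  have Gbound: "norm (G z) \<le> (2/3) / (1 - (norm z)\<^sup>2 / 3)" if "z \<in> ball 0 R" for z :: complex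
  proof -
    have "norm (G z) = 2/3 * norm (deriv F (of_real s * z))" by (simp add: G_def norm_mult)
    also have "\<dots> \<le> 2/3 * (1 / (1 - (norm (of_real s * z))\<^sup>2))"
      using dF[OF map[OF that]] by (intro mult_left_mono) auto
    also have "(norm (of_real s * z))\<^sup>2 = (norm z)\<^sup>2 / 3"
      using s0 s2 by (simp add: norm_mult power_mult_distrib)
    finally show ?thesis by simp
  qed
  have bd: "norm (G z) \<le> 1" if "z \<in> sphere 0 1" for z :: complex
  proof -
    have "z \<in> ball 0 R" using that R1 by simp
    from Gbound[OF this] show ?thesis using that by simp
  qed
  define c0 where "c0 = 2 * a / 3"
  have c0: "0 \<le> c0" "c0 < 1" using assms(3,4) by (auto simp: c0_def)
  have nz: "of_real c0 * G z \<noteq> 1" if "z \<in> ball 0 R" for z :: complex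
  proof -
    have nzR: "norm z < 5/4" using that by (simp add: R_def)
    have "(norm z)\<^sup>2 < (5/4)\<^sup>2" using nzR by (intro power_strict_mono) auto
    then have pos: "1 - (norm z)\<^sup>2 / 3 > 23/48" by (simp add: power2_eq_square)
    have "norm (of_real c0 * G z) = c0 * norm (G z)" using c0 by (simp add: norm_mult)
    also have "\<dots> \<le> c0 * ((2/3) / (1 - (norm z)\<^sup>2 / 3))"
      using Gbound[OF that] c0 by (intro mult_left_mono) auto
    also have "\<dots> < 1"
    proof -
      have "c0 * (2/3) < 1 - (norm z)\<^sup>2 / 3" using pos c0 assms(4) by (simp add: c0_def)
      then show ?thesis using pos by (simp add: field_simps)
    qed
    finally show ?thesis by auto
  qed
  have G0: "G 0 = of_real c0"
    using assms(2) by (simp add: G_def c0_def taylor_coeff_def)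
  have coef: "taylor_coeff G j = (2/3) * of_real s ^ j * of_nat (Suc j) * taylor_coeff F (Suc j)" for j
  proof -
    have oR: "open (ball (0::complex) R)" "(0::complex) \<in> ball 0 R" using R1 by auto
    have "(deriv ^^ j) G 0 = (2/3) * (deriv ^^ j) (\<lambda>z. deriv F (of_real s * z)) 0"
      unfolding G_def by (rule higher_deriv_cmult[OF h1 oR(2) oR(1)])
    also have "(deriv ^^ j) (\<lambda>z. deriv F (of_real s * z)) 0 = of_real s ^ j * (deriv ^^ j) (deriv F) (of_real s * 0)"
      by (rule higher_deriv_compose_linear[OF dFh oR(1) _ oR(2) map]) auto
    also have "(deriv ^^ j) (deriv F) = (deriv ^^ Suc j) F"
      by (simp only: funpow_Suc_right o_def)
    finally have geq: "(deriv ^^ j) G 0 = (2/3) * of_real s ^ j * (deriv ^^ Suc j) F 0" by simp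
    have ne: "(of_nat (Suc j)::complex) \<noteq> 0" by (metis of_nat_eq_0_iff nat.distinct(1))
    have tc: "taylor_coeff F (Suc j) = (deriv ^^ Suc j) F 0 / (of_nat (Suc j) * of_nat (fact j))"
      by (simp only: taylor_coeff_def fact_Suc of_nat_mult of_nat_id)
    have nf: "(of_nat (fact j)::complex) \<noteq> 0" by simp
    have gen: "\<And>(c::complex) D p f. p \<noteq> 0 \<Longrightarrow> f \<noteq> 0 \<Longrightarrow> c * D / f = c * p * (D / (p * f))"
      by (simp add: field_simps)
    have "taylor_coeff G j = ((2/3) * of_real s ^ j) * (deriv ^^ Suc j) F 0 / of_nat (fact j)"
      unfolding taylor_coeff_def geq by (simp only: mult.assoc)
    also have "\<dots> = ((2/3) * of_real s ^ j) * of_nat (Suc j) * ((deriv ^^ Suc j) F 0 / (of_nat (Suc j) * of_nat (fact j)))"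
      by (rule gen[OF ne nf])
    finally show ?thesis unfolding tc by (simp only: mult.assoc)
  qed
  have coef2: "(cmod (taylor_coeff G j))\<^sup>2 = (4/9) * (1/3)^j * (real (Suc j))\<^sup>2 * (cmod (taylor_coeff F (Suc j)))\<^sup>2" for j
  proof -
    have nG: "cmod (taylor_coeff G j) = (2/3) * s^j * real (Suc j) * cmod (taylor_coeff F (Suc j))"
      unfolding coef using s0 by (simp add: norm_mult norm_power norm_of_nat del: of_nat_Suc)
    have sj: "(s^j)\<^sup>2 = (1/3)^j" by (metis power_mult mult.commute s2)
    have "(cmod (taylor_coeff G j))\<^sup>2 = (2/3)\<^sup>2 * (s^j)\<^sup>2 * (real (Suc j))\<^sup>2 * (cmod (taylor_coeff F (Suc j)))\<^sup>2"
      unfolding nG by (simp only: power_mult_distrib)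
    then show ?thesis unfolding sj by (simp add: power2_eq_square)
  qed
  obtain m where nm: "n = Suc m" and m1: "m \<ge> 1" using assms(7) by (cases n) auto
  define w where "w = (\<lambda>j::nat. (9/4)*3^j*r^(2*j+2)/(real j+1))"
  define e where "e = (\<lambda>j::nat. (1 - c0\<^sup>2)\<^sup>2 * (c0\<^sup>2)^(j-1))"
  define x where "x = (\<lambda>j::nat. (cmod (taylor_coeff G j))\<^sup>2)"
  define X where "X = (4/3) * a\<^sup>2 * r\<^sup>2"
  define K where "K = 3 * (9 - 4 * a\<^sup>2)\<^sup>2 / (64 * a ^ 4)"
  have r2: "r\<^sup>2 \<le> 1/3"
  proof -
    have "r\<^sup>2 \<le> (1 / sqrt 3)\<^sup>2" using assms(5,6) by (intro power_mono) auto
    then show ?thesis by (simp add: power_divide)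
  qed
  have iv: "{2..n} = {Suc 1..Suc m}" by (simp add: nm)
  have L: "(\<Sum>k=2..n. real k * (norm (taylor_coeff F k))\<^sup>2 * r ^ (2*k)) = (\<Sum>j=1..m. w j * x j)"
  proof -
    have "(\<Sum>k=2..n. real k * (norm (taylor_coeff F k))\<^sup>2 * r ^ (2*k)) =
        (\<Sum>j=1..m. real (Suc j) * (norm (taylor_coeff F (Suc j)))\<^sup>2 * r ^ (2*Suc j))"
      unfolding iv by (rule sum.shift_bounds_cl_Suc_ivl)
    also have "\<dots> = (\<Sum>j=1..m. w j * x j)"
    proof (rule sum.cong[OF refl])
      fix j :: nat
      have t: "(3::real)^j * (1/3)^j = 1" by (simp flip: power_mult_distrib)
      have e2: "r ^ (2*Suc j) = r^(2*j+2)" by simp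
      show "real (Suc j) * (norm (taylor_coeff F (Suc j)))\<^sup>2 * r ^ (2*Suc j) = w j * x j"
      proof -
        have gen2: "\<And>p q B R::real. p > 0 \<Longrightarrow> q > 0 \<Longrightarrow> q*B*R = (9/4)*p*R/q*((4/9)*(1/p)*q\<^sup>2*B)"
          by (simp add: field_simps power2_eq_square)
        have p: "(3::real)^j > 0" by simp
        have g: "real j + 1 > 0" by simp
        show ?thesis
          unfolding w_def x_def coef2 e2 power_one_over
          using gen2[OF p g, of "(norm (taylor_coeff F (Suc j)))\<^sup>2" "r^(2*j+2)"]
          by (simp only: of_nat_Suc add.commute)
      qed
    qed
    finally show ?thesis .
  qed
  have Rr: "(\<Sum>k=2..n. (1 / real k) * X ^ k) = (\<Sum>j=1..m. (1 / real (Suc j)) * X ^ Suc j)"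
    unfolding iv by (rule sum.shift_bounds_cl_Suc_ivl)
  have P: "(\<Sum>j=1..k. x j) \<le> (\<Sum>j=1..k. e j)" for k
    unfolding x_def e_def by (rule schur_bound[OF Gh R1 bd nz G0 c0])
  have pos: "0 \<le> w j" for j using assms(5) by (simp add: w_def)
  have mono: "w (Suc j) \<le> w j" for j
  proof -
    define u where "u = (3::real)^j * r^(2*j+2)"
    have u0: "0 \<le> u" using assms(5) by (simp add: u_def)
    have ex: "2*Suc j+2 = (2*j+2)+2" by simp
    have eq: "(3::real)^(Suc j) * r^(2*Suc j+2) = (3*r\<^sup>2) * u"
      unfolding u_def ex power_add by (simp add: power2_eq_square)
    have "w (Suc j) = (9/4) * ((3::real)^(Suc j) * r^(2*Suc j+2)) / (real (Suc j) + 1)"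
      unfolding w_def by (simp only: mult.assoc)
    also have "\<dots> = (9/4) * ((3*r\<^sup>2) * u) / (real (Suc j) + 1)"
      by (simp only: eq)
    also have "\<dots> \<le> (9/4) * u / (real (Suc j) + 1)"
      using r2 u0 by (intro divide_right_mono mult_left_mono) (auto intro: mult_left_le_one_le)
    also have "\<dots> \<le> (9/4) * u / (real j + 1)"
      using u0 by (intro divide_left_mono) auto
    also have "\<dots> = w j" by (simp add: w_def u_def)
    finally show ?thesis .
  qed
  have main: "(\<Sum>j=1..m. w j * x j) \<le> (\<Sum>j=1..m. w j * e j)"
    by (rule abel[where w=w and x=x and y=e]) (use P mono pos in auto)
  also have "(\<Sum>j=1..m. w j * e j) = (\<Sum>j=1..m. K * ((1 / real (Suc j)) * X ^ Suc j))"
  proof (rule sum.cong[OF refl])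
    fix j assume "j \<in> {1..m}"
    then have "j \<ge> 1" by simp
    from we[OF assms(3) this, of r] show "w j * e j = K * ((1 / real (Suc j)) * X ^ Suc j)"
      by (simp add: w_def e_def c0_def K_def X_def)
  qed
  also have "\<dots> = K * (\<Sum>j=1..m. (1 / real (Suc j)) * X ^ Suc j)"
    by (simp add: sum_distrib_left)
  finally show ?thesis unfolding L Rr[unfolded X_def] K_def X_def .
qed


end
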